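(* Let $f\in C^1_b(\mathbb{R})$ and let $(u,m)$ be a classical solution of the MFG system. Let $K=K(\|f\|_{L^\infty},d)>0$ be the constant of Proposition 2.4, i.e. a constant depending only on $\|f\|_{L^\infty}$ and $d$ such that every classical solution $(\tilde u,\tilde m)$ of the MFG system satisfies $\|D\tilde u\|_{L^\infty}\le K$, and set $M:=2\|f\|_{L^\infty}+K^2/2$ and $\Lambda:=\max\{2M,\ K^2/2+\|m_0\|_{L^\infty}\|f'\|_{L^\infty}\}$. Then $(u,m)$ is stable provided that one of the following holds: (i) $f'\ge 0$; (ii) $\lambda>\Lambda$.
   Context: $\mathbb{T}^d$ is the flat torus, $\lambda>0$, $\alpha\in(0,1)$, $m_0\in C^{0,\alpha}(\mathbb{T}^d)$ a probability density. $C^1_b(\mathbb{R})$: $C^1$ functions with $f,f'$ bounded. The MFG system is $-\Delta u + \tfrac12|Du|^2 + \lambda u = f(m)$, $-\Delta m - \operatorname{div}(m Du) + \lambda m = \lambda m_0$ in $\mathbb{T}^d$ (classical solution: $C^2$ pair satisfying it pointwise). A classical solution $(u,m)$ is stable if $(v,\rho)=(0,0)$ is the unique classical solution of $-\Delta v + Du\cdot Dv + \lambda v = f'(m)\rho$, $-\Delta\rho - \operatorname{div}(\rho Du) + \lambda\rho = \operatorname{div}(m Dv)$ in $\mathbb{T}^d$. The constant $K$ does not depend on $\lambda$. *)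

theory Defs
  imports "HOL-Analysis.Analysis"
begin

text \<open>Functions on the flat torus T^d are represented as functions on R^d
 (type real^'d) that are 1-periodic in every coordinate direction.\<close>

definition periodic :: "(real^'d \<Rightarrow> 'b) \<Rightarrow> bool" where
  "periodic u \<longleftrightarrow> (\<forall>x i. u (x + axis i 1) = u x)"

definition pd :: "'d::finite \<Rightarrow> (real^'d \<Rightarrow> real) \<Rightarrow> real^'d \<Rightarrow> real" where
  "pd i u x = deriv (\<lambda>t. u (x + t *\<^sub>R axis i 1)) 0"

definition C1 :: "(real^'d::finite \<Rightarrow> real) \<Rightarrow> bool" where
  "C1 u \<longleftrightarrow> (\<forall>x. u differentiable (at x)) \<and> (\<forall>i. continuous_on UNIV (pd i u))"

definition C2 :: "(real^'d::finite \<Rightarrow> real) \<Rightarrow> bool" where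
  "C2 u \<longleftrightarrow> C1 u \<and> (\<forall>i. C1 (pd i u))"

definition grad :: "(real^'d::finite \<Rightarrow> real) \<Rightarrow> real^'d \<Rightarrow> real^'d" where
  "grad u x = (\<chi> i. pd i u x)"

definition lap :: "(real^'d::finite \<Rightarrow> real) \<Rightarrow> real^'d \<Rightarrow> real" where
  "lap u x = (\<Sum>i\<in>UNIV. pd i (pd i u) x)"

definition divg :: "(real^'d::finite \<Rightarrow> real^'d) \<Rightarrow> real^'d \<Rightarrow> real" where
  "divg V x = (\<Sum>i\<in>UNIV. pd i (\<lambda>y. V y $ i) x)"

definition supn :: "('a \<Rightarrow> real) \<Rightarrow> real" where
  "supn g = (SUP x. \<bar>g x\<bar>)"

definition C1b :: "(real \<Rightarrow> real) \<Rightarrow> bool" where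
  "C1b f \<longleftrightarrow> (\<forall>s. f differentiable (at s)) \<and> continuous_on UNIV (deriv f)
     \<and> bounded (range f) \<and> bounded (range (deriv f))"

definition holder_density :: "real \<Rightarrow> (real^'d::finite \<Rightarrow> real) \<Rightarrow> bool" where
  "holder_density \<alpha> m0 \<longleftrightarrow> periodic m0 \<and> (\<forall>x. 0 \<le> m0 x)
     \<and> (\<exists>C. \<forall>x y. \<bar>m0 x - m0 y\<bar> \<le> C * norm (x - y) powr \<alpha>)
     \<and> integral (cbox 0 One) m0 = 1"

definition mfg_sol ::
  "real \<Rightarrow> (real \<Rightarrow> real) \<Rightarrow> (real^'d::finite \<Rightarrow> real) \<Rightarrow> (real^'d \<Rightarrow> real) \<Rightarrow> (real^'d \<Rightarrow> real) \<Rightarrow> bool" where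
  "mfg_sol lam f m0 u m \<longleftrightarrow> periodic u \<and> periodic m \<and> C2 u \<and> C2 m \<and>
     (\<forall>x. - lap u x + (1/2) * (norm (grad u x))\<^sup>2 + lam * u x = f (m x)) \<and>
     (\<forall>x. - lap m x - divg (\<lambda>y. m y *\<^sub>R grad u y) x + lam * m x = lam * m0 x)"

definition stable ::
  "real \<Rightarrow> (real \<Rightarrow> real) \<Rightarrow> (real^'d::finite \<Rightarrow> real) \<Rightarrow> (real^'d \<Rightarrow> real) \<Rightarrow> bool" where
  "stable lam f u m \<longleftrightarrow> (\<forall>v \<rho>. periodic v \<and> periodic \<rho> \<and> C2 v \<and> C2 \<rho> \<and>
     (\<forall>x. - lap v x + grad u x \<bullet> grad v x + lam * v x = deriv f (m x) * \<rho> x) \<and>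
     (\<forall>x. - lap \<rho> x - divg (\<lambda>y. \<rho> y *\<^sub>R grad u y) x + lam * \<rho> x
            = divg (\<lambda>y. m y *\<^sub>R grad v y) x)
     \<longrightarrow> v = (\<lambda>_. 0) \<and> \<rho> = (\<lambda>_. 0))"

end

theory Submission
  imports Defs
begin

lemma pd_hasd:
  fixes g :: "real^'d::finite \<Rightarrow> real"
  assumes D: "(g has_derivative D) (at x)"
  shows "pd i g x = D (axis i 1)"
proof -
  have l: "((\<lambda>t. x + t *\<^sub>R axis i 1) has_derivative (\<lambda>t. t *\<^sub>R axis i 1)) (at 0)"
    by (auto intro!: derivative_eq_intros)
  have "((\<lambda>t. g (x + t *\<^sub>R axis i 1)) has_derivative (\<lambda>t. D (t *\<^sub>R axis i 1))) (at 0)"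
    using diff_chain_at[OF l, of g D] D by (simp add: o_def)
  moreover have "t * D (axis i 1) = D (t *\<^sub>R axis i 1)" for t
    using linear_scale[OF has_derivative_linear[OF D]] by simp
  ultimately have "((\<lambda>t. g (x + t *\<^sub>R axis i 1)) has_real_derivative D (axis i 1)) (at 0)"
    by (rule has_derivative_imp_has_field_derivative)
  then show ?thesis unfolding pd_def by (rule DERIV_imp_deriv)
qed

lemma pd_line:
  fixes g :: "real^'d::finite \<Rightarrow> real"
  assumes "\<And>y. g differentiable (at y)"
  shows "((\<lambda>t. g (x + t *\<^sub>R axis i 1)) has_real_derivative pd i g (x + s *\<^sub>R axis i 1)) (at s)"
proof -
  obtain D where D: "(g has_derivative D) (at (x + s *\<^sub>R axis i 1))"
    using assms differentiable_def by blast
  have l: "((\<lambda>t. x + t *\<^sub>R axis i 1) has_derivative (\<lambda>t. t *\<^sub>R axis i 1)) (at s)"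
    by (auto intro!: derivative_eq_intros)
  have "((\<lambda>t. g (x + t *\<^sub>R axis i 1)) has_derivative (\<lambda>t. D (t *\<^sub>R axis i 1))) (at s)"
    using diff_chain_at[OF l, of g D] D by (simp add: o_def)
  moreover have "t * D (axis i 1) = D (t *\<^sub>R axis i 1)" for t
    using linear_scale[OF has_derivative_linear[OF D]] by simp
  ultimately have "((\<lambda>t. g (x + t *\<^sub>R axis i 1)) has_real_derivative D (axis i 1)) (at s)"
    by (rule has_derivative_imp_has_field_derivative)
  then show ?thesis using pd_hasd[OF D, of i] by simp
qed

lemma C1_diff: "C1 g \<Longrightarrow> g differentiable (at x)"
  unfolding C1_def by blast
lemma C1_cont: "C1 g \<Longrightarrow> continuous_on UNIV g"
  unfolding C1_def by (meson differentiable_imp_continuous_within continuous_at_imp_continuous_on)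
lemma C1_pdcont: "C1 g \<Longrightarrow> continuous_on UNIV (pd i g)"
  unfolding C1_def by blast
lemma C2_C1: "C2 g \<Longrightarrow> C1 g" unfolding C2_def by blast
lemma C2_pd: "C2 g \<Longrightarrow> C1 (pd i g)" unfolding C2_def by blast

lemma pd_add:
  assumes "a differentiable (at x)" "b differentiable (at x)"
  shows "pd i (\<lambda>y. a y + b y) x = pd i a x + pd i b x"
proof -
  obtain A B where AB: "(a has_derivative A) (at x)" "(b has_derivative B) (at x)"
    using assms differentiable_def by blast
  show ?thesis using pd_hasd[OF has_derivative_add[OF AB]] pd_hasd[OF AB(1)] pd_hasd[OF AB(2)]
    by simp
qed

lemma pd_mult:
  assumes "a differentiable (at x)" "b differentiable (at x)"
  shows "pd i (\<lambda>y. a y * b y) x = pd i a x * b x + a x * pd i b x"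
proof -
  obtain A B where AB: "(a has_derivative A) (at x)" "(b has_derivative B) (at x)"
    using assms differentiable_def by blast
  have M: "((\<lambda>y. a y * b y) has_derivative (\<lambda>h. a x * B h + A h * b x)) (at x)"
    using has_derivative_mult[OF AB] by simp
  show ?thesis using pd_hasd[OF M] pd_hasd[OF AB(1)] pd_hasd[OF AB(2)]
    by (simp add: algebra_simps)
qed

lemma pd_minus:
  assumes "a differentiable (at x)"
  shows "pd i (\<lambda>y. - a y) x = - pd i a x"
proof -
  obtain A where A: "(a has_derivative A) (at x)"
    using assms differentiable_def by blast
  show ?thesis using pd_hasd[OF has_derivative_minus[OF A]] pd_hasd[OF A] by simp
qed

lemma pd_const: "pd i (\<lambda>y. c) x = 0"
  unfolding pd_def by simp

lemma pd_exp:
  assumes "a differentiable (at x)"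
  shows "pd i (\<lambda>y. exp (a y)) x = exp (a x) * pd i a x"
proof -
  obtain A where A: "(a has_derivative A) (at x)"
    using assms differentiable_def by blast
  show ?thesis using pd_hasd[OF has_derivative_exp[OF A]] pd_hasd[OF A] by simp
qed

lemma C1_add: "C1 a \<Longrightarrow> C1 b \<Longrightarrow> C1 (\<lambda>y. a y + b y)"
proof -
  assume a: "C1 a" and b: "C1 b"
  have e: "pd i (\<lambda>y. a y + b y) = (\<lambda>y. pd i a y + pd i b y)" for i
    using a b by (intro ext) (simp add: pd_add C1_diff)
  have "continuous_on UNIV (\<lambda>y. pd i a y + pd i b y)" for i
    using C1_pdcont[OF a] C1_pdcont[OF b] by (intro continuous_on_add)
  moreover have "(\<lambda>y. a y + b y) differentiable (at x)" for x
    using C1_diff[OF a, of x] C1_diff[OF b, of x] by (rule differentiable_add)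
  ultimately show ?thesis unfolding C1_def e by blast
qed
lemma C1_mult: "C1 a \<Longrightarrow> C1 b \<Longrightarrow> C1 (\<lambda>y. a y * b y)"
proof -
  assume a: "C1 a" and b: "C1 b"
  have e: "pd i (\<lambda>y. a y * b y) = (\<lambda>y. pd i a y * b y + a y * pd i b y)" for i
    using a b by (intro ext) (simp add: pd_mult C1_diff)
  have "continuous_on UNIV (\<lambda>y. pd i a y * b y + a y * pd i b y)" for i
    using C1_cont[OF a] C1_cont[OF b] C1_pdcont[OF a] C1_pdcont[OF b]
    by (intro continuous_on_add continuous_on_mult)
  moreover have "(\<lambda>y. a y * b y) differentiable (at x)" for x
    using C1_diff[OF a, of x] C1_diff[OF b, of x] by (rule differentiable_mult)
  ultimately show ?thesis unfolding C1_def e by blast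
qed
lemma C1_minus: "C1 a \<Longrightarrow> C1 (\<lambda>y. - a y)"
proof -
  assume a: "C1 a"
  have e: "pd i (\<lambda>y. - a y) = (\<lambda>y. - pd i a y)" for i
    using a by (intro ext) (simp add: pd_minus C1_diff)
  have "continuous_on UNIV (\<lambda>y. - pd i a y)" for i
    using C1_pdcont[OF a] by (intro continuous_on_minus)
  moreover have "(\<lambda>y. - a y) differentiable (at x)" for x
    using C1_diff[OF a, of x] by (rule differentiable_minus)
  ultimately show ?thesis unfolding C1_def e by blast
qed
lemma C1_const: "C1 (\<lambda>y. c)"
  unfolding C1_def pd_const by simp
lemma C1_exp: "C1 a \<Longrightarrow> C1 (\<lambda>y. exp (a y))"
proof -
  assume a: "C1 a"
  have e: "pd i (\<lambda>y. exp (a y)) = (\<lambda>y. exp (a y) * pd i a y)" for i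
    using a by (intro ext) (simp add: pd_exp C1_diff)
  have B: "continuous_on UNIV (\<lambda>y. exp (a y) * pd i a y)" for i
    using C1_cont[OF a] C1_pdcont[OF a]
    by (intro continuous_on_exp continuous_on_mult)
  have A: "(\<lambda>y. exp (a y)) differentiable (at x)" for x
  proof -
    obtain D where "(a has_derivative D) (at x)" using C1_diff[OF a, of x] differentiable_def by blast
    from has_derivative_exp[OF this] show ?thesis unfolding differentiable_def by blast
  qed
  show ?thesis unfolding C1_def e using A B by simp
qed

lemma C2_mult: "C2 a \<Longrightarrow> C2 b \<Longrightarrow> C2 (\<lambda>y. a y * b y)"
proof -
  assume a: "C2 a" and b: "C2 b"
  have "pd i (\<lambda>y. a y * b y) = (\<lambda>y. pd i a y * b y + a y * pd i b y)" for i
    using a b by (intro ext) (simp add: pd_mult C1_diff C2_C1)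
  then show ?thesis using a b unfolding C2_def
    by (simp add: C1_add C1_mult)
qed
lemma C2_exp: "C2 a \<Longrightarrow> C2 (\<lambda>y. exp (a y))"
proof -
  assume a: "C2 a"
  have "pd i (\<lambda>y. exp (a y)) = (\<lambda>y. exp (a y) * pd i a y)" for i
    using a by (intro ext) (simp add: pd_exp C1_diff C2_C1)
  then show ?thesis using a unfolding C2_def
    by (simp add: C1_mult C1_exp)
qed

lemma axis_Basis: "axis i (1::real) \<in> (Basis :: (real^'d::finite) set)"
  unfolding Basis_vec_def by auto

lemma One_nth[simp]: "(One::real^'d::finite) $ i = 1"
proof -
  have "One \<bullet> axis i (1::real) = (1::real)" using inner_sum_Basis[OF axis_Basis[of i]] .
  then show ?thesis by (simp add: inner_axis)
qed

lemma One_nth'[simp]: "(\<Sum>x\<in>(Basis::(real^'d::finite) set). x $ i) = 1"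
  using One_nth[of i] unfolding sum_component .

lemma periodic_nat:
  assumes "periodic g"
  shows "g (x + real n *\<^sub>R axis i 1) = g x"
proof (induction n)
  case 0 then show ?case by simp
next
  case (Suc n)
  have "x + real (Suc n) *\<^sub>R axis i 1 = (x + real n *\<^sub>R axis i 1) + axis i 1"
    by (simp add: algebra_simps)
  then have "g (x + real (Suc n) *\<^sub>R axis i 1) = g ((x + real n *\<^sub>R axis i 1) + axis i 1)"
    by (rule arg_cong)
  also have "\<dots> = g (x + real n *\<^sub>R axis i 1)" using assms unfolding periodic_def by blast
  finally show ?case using Suc by simp
qed

lemma periodic_int:
  assumes "periodic g"
  shows "g (x + of_int n *\<^sub>R axis i 1) = g x"
proof (cases "n \<ge> 0")
  case True
  then obtain k where "n = int k" by (metis nonneg_int_cases)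
  then show ?thesis using periodic_nat[OF assms] by simp
next
  case False
  then obtain k where k: "n = - int k" by (metis nonpos_int_cases linorder_not_le less_imp_le)
  have "g ((x + of_int n *\<^sub>R axis i 1) + real k *\<^sub>R axis i 1) = g (x + of_int n *\<^sub>R axis i 1)"
    by (rule periodic_nat[OF assms])
  moreover have "(x + of_int n *\<^sub>R axis i 1) + real k *\<^sub>R axis i 1 = x"
    using k by (simp add: algebra_simps)
  ultimately show ?thesis by simp
qed

lemma periodic_sum:
  assumes "periodic g" "finite S"
  shows "g (x + (\<Sum>j\<in>S. of_int (n j) *\<^sub>R axis j 1)) = g x"
  using assms(2)
proof (induction S)
  case empty then show ?case by simp
next
  case (insert j S)
  have "x + (\<Sum>j\<in>insert j S. of_int (n j) *\<^sub>R axis j 1)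
      = (x + (\<Sum>j\<in>S. of_int (n j) *\<^sub>R axis j 1)) + of_int (n j) *\<^sub>R axis j 1"
    using insert by (simp add: algebra_simps)
  then have "g (x + (\<Sum>j\<in>insert j S. of_int (n j) *\<^sub>R axis j 1))
      = g ((x + (\<Sum>j\<in>S. of_int (n j) *\<^sub>R axis j 1)) + of_int (n j) *\<^sub>R axis j 1)"
    by (rule arg_cong)
  also have "\<dots> = g (x + (\<Sum>j\<in>S. of_int (n j) *\<^sub>R axis j 1))"
    by (rule periodic_int[OF assms(1)])
  finally show ?case using insert by simp
qed

lemma periodic_red:
  fixes g :: "real^'d::finite \<Rightarrow> 'b"
  assumes "periodic g"
  shows "\<exists>y\<in>cbox 0 One. g x = g y"
proof -
  define y where "y = x + (\<Sum>j\<in>UNIV. of_int (- floor (x$j)) *\<^sub>R axis j 1)"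
  have yk: "y $ k = x $ k - of_int (floor (x$k))" for k
    unfolding y_def by (simp add: sum_component axis_def if_distrib cong: if_cong)
  have "y \<in> cbox 0 One"
    unfolding mem_box_cart using yk
    by (auto simp: floor_le_iff) (smt (verit) real_of_int_floor_add_one_gt)
  moreover have "g y = g x" unfolding y_def by (rule periodic_sum[OF assms]) simp
  ultimately show ?thesis by (intro bexI[of _ y]) simp_all
qed

lemma cube_ne: "(0::real^'d::finite) \<in> cbox 0 One"
  by (simp add: mem_box_cart)

lemma periodic_max:
  fixes g :: "real^'d::finite \<Rightarrow> real"
  assumes "periodic g" "continuous_on UNIV g"
  shows "\<exists>x0. \<forall>x. g x \<le> g x0"
proof -
  obtain x0 where "x0 \<in> cbox 0 One" "\<forall>y\<in>cbox 0 One. g y \<le> g x0"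
    using continuous_attains_sup[OF compact_cbox, of 0 One g] cube_ne
      continuous_on_subset[OF assms(2)] by blast
  then show ?thesis using periodic_red[OF assms(1)] by metis
qed

lemma periodic_min:
  fixes g :: "real^'d::finite \<Rightarrow> real"
  assumes "periodic g" "continuous_on UNIV g"
  shows "\<exists>x0. \<forall>x. g x0 \<le> g x"
proof -
  obtain x0 where "x0 \<in> cbox 0 One" "\<forall>y\<in>cbox 0 One. g x0 \<le> g y"
    using continuous_attains_inf[OF compact_cbox, of 0 One g] cube_ne
      continuous_on_subset[OF assms(2)] by blast
  then show ?thesis using periodic_red[OF assms(1)] by metis
qed

lemma max1d:
  fixes \<phi> \<phi>' :: "real \<Rightarrow> real"
  assumes d1: "\<And>t. (\<phi> has_real_derivative \<phi>' t) (at t)"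
    and d2: "(\<phi>' has_real_derivative c) (at 0)"
    and mx: "\<And>t. \<phi> t \<le> \<phi> 0"
  shows "\<phi>' 0 = 0 \<and> c \<le> 0"
proof
  show z: "\<phi>' 0 = 0"
  proof -
    have "\<forall>y. \<bar>0 - y\<bar> < 1 \<longrightarrow> \<phi> y \<le> \<phi> 0" using mx by blast
    from DERIV_local_max[OF d1[of 0] _ this] show ?thesis by simp
  qed
  show "c \<le> 0"
  proof (rule ccontr)
    assume "\<not> c \<le> 0"
    then obtain d where d: "d > 0" "\<And>h. h > 0 \<Longrightarrow> h < d \<Longrightarrow> \<phi>' 0 < \<phi>' (0 + h)"
      using DERIV_pos_inc_right[OF d2] by force
    obtain z where z1: "z > 0" "z < d/2" "\<phi> (d/2) - \<phi> 0 = (d/2 - 0) * \<phi>' z"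
      using MVT2[of 0 "d/2" \<phi> \<phi>'] d1 d by force
    have "\<phi>' z > 0" using d(2)[of z] z1 z by simp
    then have "(d/2 - 0) * \<phi>' z > 0" using d by simp
    then have "\<phi> (d/2) - \<phi> 0 > 0" using z1(3) by linarith
    then show False using mx[of "d/2"] by simp
  qed
qed

lemma min1d:
  fixes \<phi> \<phi>' :: "real \<Rightarrow> real"
  assumes d1: "\<And>t. (\<phi> has_real_derivative \<phi>' t) (at t)"
    and d2: "(\<phi>' has_real_derivative c) (at 0)"
    and mn: "\<And>t. \<phi> 0 \<le> \<phi> t"
  shows "\<phi>' 0 = 0 \<and> c \<ge> 0"
proof -
  have "(\<lambda>t. - \<phi>' t) 0 = 0 \<and> - c \<le> 0"
    by (rule max1d[of "\<lambda>t. - \<phi> t"]) (use d1 d2 mn in \<open>auto intro!: derivative_intros\<close>)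
  then show ?thesis by simp
qed

lemma maxpr:
  fixes w :: "real^'d::finite \<Rightarrow> real"
  assumes w: "C2 w" and mx: "\<And>x. w x \<le> w x0"
  shows "pd i w x0 = 0 \<and> pd i (pd i w) x0 \<le> 0"
proof -
  have d1: "((\<lambda>t. w (x0 + t *\<^sub>R axis i 1)) has_real_derivative pd i w (x0 + t *\<^sub>R axis i 1)) (at t)" for t
    by (rule pd_line) (use w C2_C1 C1_diff in blast)
  have d2: "((\<lambda>t. pd i w (x0 + t *\<^sub>R axis i 1)) has_real_derivative pd i (pd i w) (x0 + 0 *\<^sub>R axis i 1)) (at 0)"
    by (rule pd_line) (use w C2_pd C1_diff in blast)
  show ?thesis using max1d[OF d1 d2] mx by simp
qed

lemma minpr:
  fixes w :: "real^'d::finite \<Rightarrow> real"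
  assumes w: "C2 w" and mn: "\<And>x. w x0 \<le> w x"
  shows "pd i w x0 = 0 \<and> pd i (pd i w) x0 \<ge> 0"
proof -
  have d1: "((\<lambda>t. w (x0 + t *\<^sub>R axis i 1)) has_real_derivative pd i w (x0 + t *\<^sub>R axis i 1)) (at t)" for t
    by (rule pd_line) (use w C2_C1 C1_diff in blast)
  have d2: "((\<lambda>t. pd i w (x0 + t *\<^sub>R axis i 1)) has_real_derivative pd i (pd i w) (x0 + 0 *\<^sub>R axis i 1)) (at 0)"
    by (rule pd_line) (use w C2_pd C1_diff in blast)
  show ?thesis using min1d[OF d1 d2] mn by simp
qed

lemma maxpr_lap:
  fixes w :: "real^'d::finite \<Rightarrow> real"
  assumes w: "C2 w" and mx: "\<And>x. w x \<le> w x0"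
  shows "grad w x0 = 0 \<and> lap w x0 \<le> 0"
  using maxpr[OF w mx]
  by (auto simp: grad_def lap_def vec_eq_iff intro: sum_nonpos)

lemma minpr_lap:
  fixes w :: "real^'d::finite \<Rightarrow> real"
  assumes w: "C2 w" and mn: "\<And>x. w x0 \<le> w x"
  shows "grad w x0 = 0 \<and> lap w x0 \<ge> 0"
  using minpr[OF w mn]
  by (auto simp: grad_def lap_def vec_eq_iff intro: sum_nonneg)

lemma int_shift:
  fixes h :: "real^'d::finite \<Rightarrow> real"
  assumes "h integrable_on cbox (a + c) (b + c)"
  shows "integral (cbox a b) (\<lambda>x. h (x + c)) = integral (cbox (a + c) (b + c)) h"
proof -
  have "(h has_integral integral (cbox (a + c) (b + c)) h) (cbox (a + c) (b + c))"
    using assms by (simp add: has_integral_integral)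
  from has_integral_affinity[OF this, of 1 c]
  have H: "((\<lambda>x. h (x + c)) has_integral integral (cbox (a + c) (b + c)) h)
         ((\<lambda>x. x + - c) ` cbox (a + c) (b + c))" by simp
  have "(\<lambda>x. x + - c) ` cbox (a + c) (b + c) = cbox a b"
    using cbox_translation[of "-c" "a + c" "b + c"] by (simp add: add.commute)
  with H show ?thesis by (simp add: integral_unique)
qed

lemma box_split_le:
  assumes c: "0 \<le> c" "c \<le> 1"
  shows "cbox 0 (One::real^'d::finite) \<inter> {x. x \<bullet> axis i 1 \<le> c} = cbox 0 (\<chi> j. if j = i then c else 1)"
proof (intro set_eqI iffI)
  fix x :: "real^'d"
  assume "x \<in> cbox 0 One \<inter> {x. x \<bullet> axis i 1 \<le> c}"
  then show "x \<in> cbox 0 (\<chi> j. if j = i then c else 1)" by (simp add: mem_box_cart inner_axis)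
next
  fix x :: "real^'d"
  assume H: "x \<in> cbox 0 (\<chi> j. if j = i then c else 1)"
  then have H': "0 \<le> x$j \<and> x$j \<le> (if j = i then c else 1)" for j by (simp add: mem_box_cart)
  have "0 \<le> x$j \<and> x$j \<le> 1" for j using H'[of j] c by (auto split: if_splits)
  moreover have "x$i \<le> c" using H'[of i] by simp
  ultimately show "x \<in> cbox 0 One \<inter> {x. x \<bullet> axis i 1 \<le> c}" by (simp add: mem_box_cart inner_axis)
qed

lemma box_split_ge:
  assumes c: "0 \<le> c" "c \<le> 1"
  shows "cbox 0 (One::real^'d::finite) \<inter> {x. x \<bullet> axis i 1 \<ge> c} = cbox (\<chi> j. if j = i then c else 0) One"
proof (intro set_eqI iffI)
  fix x :: "real^'d"
  assume "x \<in> cbox 0 One \<inter> {x. x \<bullet> axis i 1 \<ge> c}"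
  then show "x \<in> cbox (\<chi> j. if j = i then c else 0) One" by (simp add: mem_box_cart inner_axis)
next
  fix x :: "real^'d"
  assume H: "x \<in> cbox (\<chi> j. if j = i then c else 0) One"
  then have H': "(if j = i then c else 0) \<le> x$j \<and> x$j \<le> 1" for j by (simp add: mem_box_cart)
  have "0 \<le> x$j \<and> x$j \<le> 1" for j using H'[of j] c by (auto split: if_splits)
  moreover have "x$i \<ge> c" using H'[of i] by simp
  ultimately show "x \<in> cbox 0 One \<inter> {x. x \<bullet> axis i 1 \<ge> c}" by (simp add: mem_box_cart inner_axis)
qed

lemma transl_inv:
  fixes g :: "real^'d::finite \<Rightarrow> real"
  assumes per: "periodic g" and cont: "continuous_on UNIV g" and t: "0 \<le> t" "t \<le> 1"
  shows "integral (cbox 0 One) (\<lambda>x. g (x + t *\<^sub>R axis i 1)) = integral (cbox 0 One) g"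
proof -
  let ?e = "axis i (1::real) :: real^'d"
  let ?C = "cbox 0 (One::real^'d)"
  have intg: "g integrable_on cbox a b" for a b
    by (rule integrable_continuous) (rule continuous_on_subset[OF cont], simp)
  have contT: "continuous_on UNIV (\<lambda>x. g (x + c))" for c
    by (rule continuous_on_compose2[OF cont]) (auto intro!: continuous_intros)
  have intgT: "(\<lambda>x. g (x + c)) integrable_on cbox a b" for a b c
    by (rule integrable_continuous) (rule continuous_on_subset[OF contT], simp)
  define A where "A = ((\<chi> j. if j = i then 1 - t else 1) :: real^'d)"
  define B where "B = ((\<chi> j. if j = i then 1 - t else 0) :: real^'d)"
  define A' where "A' = ((\<chi> j. if j = i then t else 1) :: real^'d)"
  define T where "T = ((\<chi> j. if j = i then t else 0) :: real^'d)"
  have T: "t *\<^sub>R ?e = T" unfolding T_def by (simp add: vec_eq_iff axis_def)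
  have s1: "?C \<inter> {x. x \<bullet> ?e \<le> 1 - t} = cbox 0 A"
    unfolding A_def using t by (intro box_split_le) simp_all
  have s2: "?C \<inter> {x. x \<bullet> ?e \<ge> 1 - t} = cbox B One"
    unfolding B_def using t by (intro box_split_ge) simp_all
  have s3: "?C \<inter> {x. x \<bullet> ?e \<le> t} = cbox 0 A'"
    unfolding A'_def using t by (intro box_split_le) simp_all
  have s4: "?C \<inter> {x. x \<bullet> ?e \<ge> t} = cbox T One"
    unfolding T_def using t by (intro box_split_ge) simp_all
  have "integral ?C (\<lambda>x. g (x + t *\<^sub>R ?e)) =
      integral (?C \<inter> {x. x \<bullet> ?e \<le> 1 - t}) (\<lambda>x. g (x + t *\<^sub>R ?e)) +
      integral (?C \<inter> {x. x \<bullet> ?e \<ge> 1 - t}) (\<lambda>x. g (x + t *\<^sub>R ?e))"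
    by (rule integral_split[OF intgT axis_Basis])
  also have "integral (?C \<inter> {x. x \<bullet> ?e \<le> 1 - t}) (\<lambda>x. g (x + t *\<^sub>R ?e)) = integral (cbox T One) g"
  proof -
    have "integral (cbox 0 A) (\<lambda>x. g (x + T)) = integral (cbox (0 + T) (A + T)) g"
      by (rule int_shift[OF intg])
    moreover have "A + T = One" unfolding A_def T_def by (simp add: vec_eq_iff)
    ultimately show ?thesis using s1 T by simp
  qed
  also have "integral (?C \<inter> {x. x \<bullet> ?e \<ge> 1 - t}) (\<lambda>x. g (x + t *\<^sub>R ?e)) = integral (cbox 0 A') g"
  proof -
    have pe: "g (x + T) = g (x + (T - ?e))" for x
    proof -
      have "g ((x + (T - ?e)) + ?e) = g (x + (T - ?e))" using per unfolding periodic_def by blast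
      moreover have "(x + (T - ?e)) + ?e = x + T" by simp
      ultimately show ?thesis by simp
    qed
    have "integral (cbox B One) (\<lambda>x. g (x + (T - ?e))) = integral (cbox (B + (T - ?e)) (One + (T - ?e))) g"
      by (rule int_shift[OF intg])
    moreover have "B + (T - ?e) = 0" unfolding B_def T_def by (simp add: vec_eq_iff axis_def)
    moreover have "One + (T - ?e) = A'" unfolding A'_def T_def by (simp add: vec_eq_iff axis_def)
    ultimately show ?thesis using s2 T pe by simp
  qed
  also have "integral (cbox T One) g + integral (cbox 0 A') g = integral ?C g"
    using integral_split[OF intg axis_Basis, of 0 One i t] s3 s4 by simp
  finally show ?thesis .
qed

lemma div_zero:
  fixes g :: "real^'d::finite \<Rightarrow> real"
  assumes per: "periodic g" and g: "C1 g"
  shows "integral (cbox 0 One) (pd i g) = 0"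
proof -
  let ?e = "axis i (1::real) :: real^'d"
  let ?C = "cbox 0 (One::real^'d)"
  define \<Phi> where "\<Phi> s = integral ?C (\<lambda>x. g (x + s *\<^sub>R ?e))" for s
  have cont: "continuous_on UNIV g" using C1_cont[OF g] .
  have contT: "continuous_on UNIV (\<lambda>x. g (x + c))" for c
    by (rule continuous_on_compose2[OF cont]) (auto intro!: continuous_intros)
  have fx: "((\<lambda>s. g (x + s *\<^sub>R ?e)) has_field_derivative pd i g (x + s *\<^sub>R ?e)) (at s within {0..1})" for s x
    by (rule has_field_derivative_at_within, rule pd_line) (use g C1_diff in blast)
  have f2: "(\<lambda>x. g (x + s *\<^sub>R ?e)) integrable_on ?C" for s
    by (rule integrable_continuous) (rule continuous_on_subset[OF contT], simp)
  have cpd: "continuous_on UNIV (\<lambda>p::real \<times> (real^'d). pd i g (snd p + fst p *\<^sub>R ?e))"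
    by (rule continuous_on_compose2[OF C1_pdcont[OF g]]) (auto intro!: continuous_intros)
  have cfx: "continuous_on ({0..1} \<times> ?C) (\<lambda>(s, x). pd i g (x + s *\<^sub>R ?e))"
    using continuous_on_subset[OF cpd] by (simp add: case_prod_beta)
  have D: "(\<Phi> has_field_derivative integral ?C (\<lambda>x. pd i g (x + 0 *\<^sub>R ?e))) (at 0 within {0..1})"
    unfolding \<Phi>_def
    by (rule leibniz_rule_field_derivative[OF fx f2 cfx]) (auto simp: convex_real_interval)
  have "\<Phi> s = integral ?C g" if "s \<in> {0..1}" for s
    unfolding \<Phi>_def using transl_inv[OF per cont, of s i] that by simp
  note Pc = this
  have D': "(\<Phi> has_derivative (*) (integral ?C (pd i g))) (at 0 within {0..1})"
    using D unfolding has_field_derivative_def by simp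
  have D0': "((\<lambda>s. integral ?C g) has_derivative (*) (integral ?C (pd i g))) (at 0 within {0..1})"
    by (rule has_derivative_transform_within[OF D' zero_less_one]) (simp_all add: Pc)
  then have D0: "((\<lambda>s. integral ?C g) has_field_derivative integral ?C (pd i g)) (at 0 within {0..1})"
    unfolding has_field_derivative_def .
  have D1: "((\<lambda>s. integral ?C g) has_field_derivative 0) (at 0 within {0..1})"
    by (rule DERIV_const)
  have nb: "at (0::real) within {0..1} \<noteq> bot"
    using at_within_Icc_at_right[of "0::real" 1] trivial_limit_at_right_real by simp
  show ?thesis
    using vector_derivative_unique_within[OF nb D0[unfolded has_real_derivative_iff_has_vector_derivative]
        D1[unfolded has_real_derivative_iff_has_vector_derivative]] .
qed

lemma pd_diff:
  assumes "a differentiable (at x)" "b differentiable (at x)"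
  shows "pd i (\<lambda>y. a y - b y) x = pd i a x - pd i b x"
  using pd_add[OF assms(1) differentiable_minus[OF assms(2)], of i] pd_minus[OF assms(2), of i]
  by simp

lemma periodic_add: "periodic a \<Longrightarrow> periodic b \<Longrightarrow> periodic (\<lambda>y. a y + b y)"
  unfolding periodic_def by simp
lemma periodic_mult: "periodic a \<Longrightarrow> periodic b \<Longrightarrow> periodic (\<lambda>y. a y * b y)"
  unfolding periodic_def by simp
lemma periodic_minus: "periodic a \<Longrightarrow> periodic (\<lambda>y. - a y)"
  unfolding periodic_def by simp
lemma periodic_exp: "periodic a \<Longrightarrow> periodic (\<lambda>y. exp (a y))"
  unfolding periodic_def by simp
lemma periodic_pd: "periodic g \<Longrightarrow> periodic (pd i g)"
proof -
  assume g: "periodic g"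
  have "pd i g (x + axis j 1) = pd i g x" for x j
  proof -
    have "(\<lambda>t. g (x + axis j 1 + t *\<^sub>R axis i 1)) = (\<lambda>t. g (x + t *\<^sub>R axis i 1))"
    proof
      fix t
      have "g ((x + t *\<^sub>R axis i 1) + axis j 1) = g (x + t *\<^sub>R axis i 1)"
        using g unfolding periodic_def by blast
      then show "g (x + axis j 1 + t *\<^sub>R axis i 1) = g (x + t *\<^sub>R axis i 1)"
        by (simp add: algebra_simps)
    qed
    then show ?thesis unfolding pd_def by simp
  qed
  then show ?thesis unfolding periodic_def by blast
qed

lemma divg_sc:
  assumes "C1 a" "C2 b"
  shows "divg (\<lambda>y. a y *\<^sub>R grad b y) x = (\<Sum>i\<in>UNIV. pd i a x * pd i b x + a x * pd i (pd i b) x)"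
  unfolding divg_def grad_def using assms
  by (intro sum.cong refl) (simp add: pd_mult C1_diff C2_pd)

lemma norm_grad2: "(norm (grad v x))\<^sup>2 = (\<Sum>i\<in>UNIV. pd i v x * pd i v x)"
  by (simp add: power2_norm_eq_inner inner_vec_def grad_def)

lemma inner_grad: "grad u x \<bullet> grad v x = (\<Sum>i\<in>UNIV. pd i u x * pd i v x)"
  by (simp add: inner_vec_def grad_def)

lemma cube_integrable:
  fixes h :: "real^'d::finite \<Rightarrow> real"
  shows "continuous_on UNIV h \<Longrightarrow> h integrable_on cbox 0 One"
  by (rule integrable_continuous) (erule continuous_on_subset, simp)

lemma int_div_sum:
  fixes G :: "'d::finite \<Rightarrow> real^'d \<Rightarrow> real"
  assumes "\<And>i. periodic (G i)" "\<And>i. C1 (G i)"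
  shows "integral (cbox 0 One) (\<lambda>x. \<Sum>i\<in>UNIV. pd i (G i) x) = 0"
proof -
  have "integral (cbox 0 One) (\<lambda>x. \<Sum>i\<in>UNIV. pd i (G i) x) = (\<Sum>i\<in>UNIV. integral (cbox 0 One) (pd i (G i)))"
    by (rule integral_sum) (auto intro!: cube_integrable C1_pdcont assms)
  also have "\<dots> = 0" by (intro sum.neutral ballI div_zero assms)
  finally show ?thesis .
qed

lemma zero_from_int:
  fixes h :: "real^'d::finite \<Rightarrow> real"
  assumes "continuous_on UNIV h" "\<And>x. 0 \<le> h x" "integral (cbox 0 One) h = 0" "x \<in> cbox 0 One"
  shows "h x = 0"
proof (rule has_integral_0_cbox_imp_0[of 0 One h])
  show "continuous_on (cbox 0 One) h" using assms(1) by (rule continuous_on_subset) simp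
  show "(h has_integral 0) (cbox 0 One)"
    using integrable_integral[OF cube_integrable[OF assms(1)]] assms(3) by simp
  show "box 0 (One::real^'d) \<noteq> {}"
    by (simp add: box_ne_empty inner_sum_Basis)
qed (use assms in auto)

lemma LL:
  fixes u m v \<rho> :: "real^'d::finite \<Rightarrow> real"
  assumes u: "C2 u" and m: "C2 m" and v: "C2 v" and r: "C2 \<rho>"
    and pu: "periodic u" and pm: "periodic m" and pv: "periodic v" and pr: "periodic \<rho>"
    and eqV: "\<And>x. - lap v x + grad u x \<bullet> grad v x + lam * v x = fp (m x) * \<rho> x"
    and eqR: "\<And>x. - lap \<rho> x - divg (\<lambda>y. \<rho> y *\<^sub>R grad u y) x + lam * \<rho> x = divg (\<lambda>y. m y *\<^sub>R grad v y) x"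
  shows "integral (cbox 0 One) (\<lambda>x. fp (m x) * (\<rho> x)\<^sup>2 + m x * (norm (grad v x))\<^sup>2) = 0"
proof -
  define G where "G i = (\<lambda>y. - \<rho> y * pd i v y + v y * pd i \<rho> y + v y * \<rho> y * pd i u y + v y * m y * pd i v y)" for i
  have d: "\<And>x. u differentiable at x" "\<And>x. m differentiable at x" "\<And>x. v differentiable at x" "\<And>x. \<rho> differentiable at x"
    "\<And>x i. pd i u differentiable at x" "\<And>x i. pd i m differentiable at x" "\<And>x i. pd i v differentiable at x" "\<And>x i. pd i \<rho> differentiable at x"
    using u m v r by (auto intro: C1_diff C2_C1 C2_pd)
  define P1 where "P1 i x = - pd i (pd i v) x + pd i u x * pd i v x" for i x
  define P2 where "P2 i x = pd i (pd i \<rho>) x + (pd i \<rho> x * pd i u x + \<rho> x * pd i (pd i u) x) + (pd i m x * pd i v x + m x * pd i (pd i v) x)" for i x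
  define P3 where "P3 i x = pd i v x * pd i v x" for i x
  have pdG: "pd i (G i) x = \<rho> x * P1 i x + v x * P2 i x + m x * P3 i x" for i x
    unfolding G_def P1_def P2_def P3_def
    apply (simp add: d pd_add pd_diff pd_mult pd_minus differentiable_add differentiable_diff differentiable_mult differentiable_minus)
    apply (simp add: algebra_simps)
    done
  have "(\<Sum>i\<in>UNIV. pd i (G i) x) = \<rho> x * (\<Sum>i\<in>UNIV. P1 i x) + v x * (\<Sum>i\<in>UNIV. P2 i x) + m x * (\<Sum>i\<in>UNIV. P3 i x)" for x
    by (simp add: pdG sum.distrib sum_distrib_left)
  also have "\<dots>x = \<rho> x * (- lap v x + grad u x \<bullet> grad v x) + v x * (lap \<rho> x + divg (\<lambda>y. \<rho> y *\<^sub>R grad u y) x + divg (\<lambda>y. m y *\<^sub>R grad v y) x)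
      + m x * (norm (grad v x))\<^sup>2" for x
    using u m v r unfolding P1_def P2_def P3_def
    by (simp add: divg_sc C2_C1 norm_grad2 inner_grad lap_def sum.distrib sum_negf sum_subtractf)
  also have "\<dots>x = fp (m x) * (\<rho> x)\<^sup>2 + m x * (norm (grad v x))\<^sup>2" for x
  proof -
    have h1: "- lap v x + grad u x \<bullet> grad v x = fp (m x) * \<rho> x - lam * v x" using eqV[of x] by simp
    have h2: "lap \<rho> x + divg (\<lambda>y. \<rho> y *\<^sub>R grad u y) x + divg (\<lambda>y. m y *\<^sub>R grad v y) x = lam * \<rho> x"
      using eqR[of x] by simp
    show ?thesis unfolding h1 h2 by (simp add: algebra_simps power2_eq_square)
  qed
  finally have eq: "(\<lambda>x. fp (m x) * (\<rho> x)\<^sup>2 + m x * (norm (grad v x))\<^sup>2) = (\<lambda>x. \<Sum>i\<in>UNIV. pd i (G i) x)"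
    by (intro ext) simp
  have "periodic (G i)" for i
    unfolding G_def using pu pm pv pr
    by (intro periodic_add periodic_mult periodic_minus periodic_pd)
  moreover have "C1 (G i)" for i
    unfolding G_def using u m v r
    by (intro C1_add C1_mult C1_minus C2_pd C2_C1)
  ultimately show ?thesis unfolding eq by (rule int_div_sum)
qed

lemma sq_ineq: "a * (a + b + c) \<ge> - (b\<^sup>2 / 2) - c\<^sup>2 / 2" for a b c :: real
proof -
  have "a * (a + b + c) + b\<^sup>2 / 2 + c\<^sup>2 / 2 = (a + (b + c) / 2)\<^sup>2 + (b - c)\<^sup>2 / 4"
    by (simp add: power2_eq_square field_simps)
  moreover have "0 \<le> (a + (b + c) / 2)\<^sup>2 + (b - c)\<^sup>2 / 4" by simp
  ultimately show ?thesis by linarith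
qed

lemma RhoEst:
  fixes u m v \<rho> :: "real^'d::finite \<Rightarrow> real"
  assumes u: "C2 u" and m: "C2 m" and v: "C2 v" and r: "C2 \<rho>"
    and pu: "periodic u" and pm: "periodic m" and pv: "periodic v" and pr: "periodic \<rho>"
    and eqR: "\<And>x. - lap \<rho> x - divg (\<lambda>y. \<rho> y *\<^sub>R grad u y) x + lam * \<rho> x = divg (\<lambda>y. m y *\<^sub>R grad v y) x"
    and Kb: "\<And>x. norm (grad u x) \<le> K"
  shows "(lam - K\<^sup>2 / 2) * integral (cbox 0 One) (\<lambda>x. (\<rho> x)\<^sup>2)
     \<le> 1/2 * integral (cbox 0 One) (\<lambda>x. (m x)\<^sup>2 * (\<Sum>i\<in>UNIV. pd i v x * pd i v x))"
proof -
  define H where "H i = (\<lambda>y. \<rho> y * (pd i \<rho> y + \<rho> y * pd i u y + m y * pd i v y))" for i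
  have d: "\<And>x. u differentiable at x" "\<And>x. m differentiable at x" "\<And>x. v differentiable at x" "\<And>x. \<rho> differentiable at x"
    "\<And>x i. pd i u differentiable at x" "\<And>x i. pd i m differentiable at x" "\<And>x i. pd i v differentiable at x" "\<And>x i. pd i \<rho> differentiable at x"
    using u m v r by (auto intro: C1_diff C2_C1 C2_pd)
  define P2 where "P2 i x = pd i (pd i \<rho>) x + (pd i \<rho> x * pd i u x + \<rho> x * pd i (pd i u) x) + (pd i m x * pd i v x + m x * pd i (pd i v) x)" for i x
  define Q where "Q i x = pd i \<rho> x * (pd i \<rho> x + \<rho> x * pd i u x + m x * pd i v x)" for i x
  have pdH: "pd i (H i) x = Q i x + \<rho> x * P2 i x" for i x
    unfolding H_def P2_def Q_def
    by (simp add: d pd_add pd_diff pd_mult pd_minus differentiable_add differentiable_diff differentiable_mult differentiable_minus)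
  have sP2: "(\<Sum>i\<in>UNIV. P2 i x) = lam * \<rho> x" for x
  proof -
    have "(\<Sum>i\<in>UNIV. P2 i x) = lap \<rho> x + divg (\<lambda>y. \<rho> y *\<^sub>R grad u y) x + divg (\<lambda>y. m y *\<^sub>R grad v y) x"
      using u m v r unfolding P2_def
      by (simp add: divg_sc C2_C1 lap_def sum.distrib)
    then show ?thesis using eqR[of x] by simp
  qed
  have sQ: "(\<Sum>i\<in>UNIV. Q i x) \<ge> - ((\<rho> x)\<^sup>2 / 2) * K\<^sup>2 - (m x)\<^sup>2 / 2 * (\<Sum>i\<in>UNIV. pd i v x * pd i v x)" for x
  proof -
    have a1: "(\<Sum>i\<in>UNIV. Q i x) \<ge> (\<Sum>i\<in>UNIV. - ((\<rho> x * pd i u x)\<^sup>2 / 2) - (m x * pd i v x)\<^sup>2 / 2)"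
      unfolding Q_def by (intro sum_mono sq_ineq)
    have a2: "(\<Sum>i\<in>UNIV. - ((\<rho> x * pd i u x)\<^sup>2 / 2) - (m x * pd i v x)\<^sup>2 / 2)
       = - ((\<rho> x)\<^sup>2 / 2) * (\<Sum>i\<in>UNIV. pd i u x * pd i u x) - (m x)\<^sup>2 / 2 * (\<Sum>i\<in>UNIV. pd i v x * pd i v x)"
      by (simp add: sum_subtractf sum_negf sum_distrib_left power2_eq_square algebra_simps sum_divide_distrib)
    have a3: "(\<Sum>i\<in>UNIV. pd i u x * pd i u x) \<le> K\<^sup>2"
    proof -
      have "(norm (grad u x))\<^sup>2 \<le> K\<^sup>2" using Kb[of x] norm_ge_zero by (intro power_mono) auto
      then show ?thesis by (simp add: norm_grad2)
    qed
    then have a4: "- ((\<rho> x)\<^sup>2 / 2) * (\<Sum>i\<in>UNIV. pd i u x * pd i u x) \<ge> - ((\<rho> x)\<^sup>2 / 2) * K\<^sup>2"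
      by (intro mult_left_mono_neg) auto
    show ?thesis using a1 a2 a4 by linarith
  qed
  have pt: "(lam - K\<^sup>2 / 2) * (\<rho> x)\<^sup>2 - 1/2 * ((m x)\<^sup>2 * (\<Sum>i\<in>UNIV. pd i v x * pd i v x))
      \<le> (\<Sum>i\<in>UNIV. pd i (H i) x)" for x
  proof -
    have "(\<Sum>i\<in>UNIV. pd i (H i) x) = (\<Sum>i\<in>UNIV. Q i x) + \<rho> x * (\<Sum>i\<in>UNIV. P2 i x)"
      by (simp add: pdH sum.distrib sum_distrib_left)
    then show ?thesis using sQ[of x] sP2[of x] by (simp add: algebra_simps power2_eq_square)
  qed
  have "periodic (H i)" for i
    unfolding H_def using pu pm pv pr
    by (intro periodic_add periodic_mult periodic_minus periodic_pd)
  moreover have "C1 (H i)" for i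
    unfolding H_def using u m v r
    by (intro C1_add C1_mult C1_minus C2_pd C2_C1)
  ultimately have I0: "integral (cbox 0 One) (\<lambda>x. \<Sum>i\<in>UNIV. pd i (H i) x) = 0" by (rule int_div_sum)
  have cr: "continuous_on UNIV \<rho>" "continuous_on UNIV m" "\<And>i. continuous_on UNIV (pd i v)"
    using u m v r by (auto intro: C1_cont C1_pdcont C2_C1)
  have c1: "continuous_on UNIV (\<lambda>x. (\<rho> x)\<^sup>2)" using cr by (auto intro!: continuous_intros)
  have c2: "continuous_on UNIV (\<lambda>x. (m x)\<^sup>2 * (\<Sum>i\<in>UNIV. pd i v x * pd i v x))"
    using cr by (auto intro!: continuous_intros)
  have c3: "continuous_on UNIV (\<lambda>x. \<Sum>i\<in>UNIV. pd i (H i) x)"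
    by (intro continuous_on_sum C1_pdcont) (use \<open>\<And>i. C1 (H i)\<close> in auto)
  have "integral (cbox 0 One) (\<lambda>x. (lam - K\<^sup>2 / 2) * (\<rho> x)\<^sup>2 - 1/2 * ((m x)\<^sup>2 * (\<Sum>i\<in>UNIV. pd i v x * pd i v x)))
       \<le> integral (cbox 0 One) (\<lambda>x. \<Sum>i\<in>UNIV. pd i (H i) x)"
    by (intro integral_le cube_integrable pt c3 continuous_intros c1 c2)
  moreover have "integral (cbox 0 One) (\<lambda>x. (lam - K\<^sup>2 / 2) * (\<rho> x)\<^sup>2 - 1/2 * ((m x)\<^sup>2 * (\<Sum>i\<in>UNIV. pd i v x * pd i v x)))
     = (lam - K\<^sup>2 / 2) * integral (cbox 0 One) (\<lambda>x. (\<rho> x)\<^sup>2) - 1/2 * integral (cbox 0 One) (\<lambda>x. (m x)\<^sup>2 * (\<Sum>i\<in>UNIV. pd i v x * pd i v x))"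
  proof -
    have i1: "(\<lambda>x. (lam - K\<^sup>2 / 2) * (\<rho> x)\<^sup>2) integrable_on cbox 0 One"
      by (rule cube_integrable) (intro continuous_on_mult_left c1)
    have i2: "(\<lambda>x. 1/2 * ((m x)\<^sup>2 * (\<Sum>i\<in>UNIV. pd i v x * pd i v x))) integrable_on cbox 0 One"
      by (rule cube_integrable) (intro continuous_on_mult_left c2)
    show ?thesis by (simp only: integral_diff[OF i1 i2] integral_mult_right)
  qed
  ultimately show ?thesis using I0 by simp
qed

lemma zero_everywhere:
  fixes h :: "real^'d::finite \<Rightarrow> real"
  assumes "periodic h" "\<And>x. x \<in> cbox 0 One \<Longrightarrow> h x = 0"
  shows "h x = 0"
  using periodic_red[OF assms(1), of x] assms(2) by auto

lemma RhoZero: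
  fixes u \<rho> :: "real^'d::finite \<Rightarrow> real"
  assumes u: "C2 u" and r: "C2 \<rho>" and pu: "periodic u" and pr: "periodic \<rho>" and lam: "lam > 0"
    and eq0: "\<And>x. - lap \<rho> x - divg (\<lambda>y. \<rho> y *\<^sub>R grad u y) x + lam * \<rho> x = 0"
  shows "\<rho> x = 0"
proof -
  define H where "H i = (\<lambda>y. exp (u y) * \<rho> y * (pd i \<rho> y + \<rho> y * pd i u y))" for i
  have d: "\<And>x. u differentiable at x" "\<And>x. \<rho> differentiable at x"
    "\<And>x i. pd i u differentiable at x" "\<And>x i. pd i \<rho> differentiable at x"
    "\<And>x. (\<lambda>y. exp (u y)) differentiable at x"
    using u r by (auto intro: C1_diff C2_C1 C2_pd C1_exp)
  define S2 where "S2 i x = (pd i \<rho> x + \<rho> x * pd i u x)\<^sup>2" for i x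
  define R where "R i x = pd i (pd i \<rho>) x + (pd i \<rho> x * pd i u x + \<rho> x * pd i (pd i u) x)" for i x
  have pdH: "pd i (H i) x = exp (u x) * S2 i x + exp (u x) * \<rho> x * R i x" for i x
    unfolding H_def S2_def R_def
    apply (simp add: d pd_add pd_mult pd_exp differentiable_add differentiable_mult)
    apply (simp add: algebra_simps power2_eq_square)
    done
  have sR: "(\<Sum>i\<in>UNIV. R i x) = lam * \<rho> x" for x
  proof -
    have "(\<Sum>i\<in>UNIV. R i x) = lap \<rho> x + divg (\<lambda>y. \<rho> y *\<^sub>R grad u y) x"
      using u r unfolding R_def
      by (simp add: divg_sc C2_C1 lap_def sum.distrib)
    then show ?thesis using eq0[of x] by simp
  qed
  have pt: "(\<Sum>i\<in>UNIV. pd i (H i) x) = exp (u x) * (\<Sum>i\<in>UNIV. S2 i x) + exp (u x) * \<rho> x * (lam * \<rho> x)" for x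
    by (simp add: pdH sum.distrib sum_distrib_left sR[symmetric])
  have nn: "(\<Sum>i\<in>UNIV. pd i (H i) x) \<ge> exp (u x) * lam * (\<rho> x)\<^sup>2" for x
  proof -
    have "0 \<le> exp (u x) * (\<Sum>i\<in>UNIV. S2 i x)" unfolding S2_def by (intro mult_nonneg_nonneg sum_nonneg) auto
    then show ?thesis unfolding pt by (simp add: algebra_simps power2_eq_square)
  qed
  have "periodic (H i)" for i
    unfolding H_def using pu pr
    by (intro periodic_add periodic_mult periodic_exp periodic_pd)
  moreover have "C1 (H i)" for i
    unfolding H_def using u r
    by (intro C1_add C1_mult C1_exp C2_pd C2_C1)
  ultimately have I0: "integral (cbox 0 One) (\<lambda>x. \<Sum>i\<in>UNIV. pd i (H i) x) = 0" by (rule int_div_sum)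
  have c3: "continuous_on UNIV (\<lambda>x. \<Sum>i\<in>UNIV. pd i (H i) x)"
    by (intro continuous_on_sum C1_pdcont) (use \<open>\<And>i. C1 (H i)\<close> in auto)
  have "(\<rho> y)\<^sup>2 = 0" if "y \<in> cbox 0 One" for y
  proof -
    have z: "(\<Sum>i\<in>UNIV. pd i (H i) y) = 0"
      by (rule zero_from_int[OF c3 _ I0 that]) (use nn lam in \<open>smt (verit) exp_gt_zero mult_nonneg_nonneg zero_le_power2\<close>)
    have "0 \<le> exp (u y) * lam * (\<rho> y)\<^sup>2" using lam by simp
    with nn[of y] z have "exp (u y) * lam * (\<rho> y)\<^sup>2 = 0" by linarith
    then show ?thesis using lam by simp
  qed
  note cz = this
  have pr2: "periodic (\<lambda>y. (\<rho> y)\<^sup>2)" using pr by (simp add: periodic_def)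
  have "(\<rho> y)\<^sup>2 = 0" for y using zero_everywhere[OF pr2 cz] by simp
  then show ?thesis by simp
qed

lemma V_zero:
  fixes u v :: "real^'d::finite \<Rightarrow> real"
  assumes u: "C2 u" and v: "C2 v" and pv: "periodic v" and lam: "lam > 0"
    and eq0: "\<And>x. - lap v x + grad u x \<bullet> grad v x + lam * v x = 0"
  shows "v x = 0"
proof -
  have cv: "continuous_on UNIV v" using v by (auto intro: C1_cont C2_C1)
  obtain x0 where x0: "\<And>x. v x \<le> v x0" using periodic_max[OF pv cv] by blast
  obtain x1 where x1: "\<And>x. v x1 \<le> v x" using periodic_min[OF pv cv] by blast
  have "v x0 \<le> 0"
  proof -
    have "grad v x0 = 0 \<and> lap v x0 \<le> 0" by (rule maxpr_lap[OF v x0])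
    then have "lam * v x0 \<le> 0" using eq0[of x0] by simp
    then show ?thesis using lam by (simp add: mult_le_0_iff)
  qed
  moreover have "v x1 \<ge> 0"
  proof -
    have "grad v x1 = 0 \<and> lap v x1 \<ge> 0" by (rule minpr_lap[OF v x1])
    then have "lam * v x1 \<ge> 0" using eq0[of x1] by simp
    then show ?thesis using lam by (simp add: zero_le_mult_iff)
  qed
  ultimately show ?thesis using x0[of x] x1[of x] by linarith
qed

lemma m_nonneg:
  fixes u m m0 :: "real^'d::finite \<Rightarrow> real"
  assumes u: "C2 u" and m: "C2 m" and pu: "periodic u" and pm: "periodic m" and lam: "lam > 0"
    and m0: "\<And>x. 0 \<le> m0 x"
    and eqM: "\<And>x. - lap m x - divg (\<lambda>y. m y *\<^sub>R grad u y) x + lam * m x = lam * m0 x"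
  shows "0 \<le> m x"
proof -
  define w where "w = (\<lambda>y. exp (u y) * m y)"
  have d: "\<And>x. u differentiable at x" "\<And>x. m differentiable at x"
    "\<And>x i. pd i u differentiable at x" "\<And>x i. pd i m differentiable at x"
    "\<And>x. (\<lambda>y. exp (u y)) differentiable at x"
    using u m by (auto intro: C1_diff C2_C1 C2_pd C1_exp)
  have w2: "C2 w" unfolding w_def using u m by (intro C2_mult C2_exp)
  have pw: "periodic w" unfolding w_def using pu pm by (intro periodic_mult periodic_exp)
  have cw: "continuous_on UNIV w" using w2 by (auto intro: C1_cont C2_C1)
  obtain x0 where x0: "\<And>x. w x0 \<le> w x" using periodic_min[OF pw cw] by blast
  have pdw: "pd i w = (\<lambda>y. exp (u y) * (pd i u y * m y + pd i m y))" for i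
    unfolding w_def by (intro ext) (simp add: d pd_mult pd_exp algebra_simps)
  have pdw2: "pd i (pd i w) x0 = exp (u x0) * pd i u x0 * (pd i u x0 * m x0 + pd i m x0)
      + exp (u x0) * (pd i (pd i u) x0 * m x0 + pd i u x0 * pd i m x0 + pd i (pd i m) x0)" for i
    unfolding pdw
    by (simp add: d pd_add pd_mult pd_exp differentiable_add differentiable_mult algebra_simps)
  have key: "pd i (pd i u) x0 * m x0 + pd i u x0 * pd i m x0 + pd i (pd i m) x0 \<ge> 0" for i
  proof -
    have mp: "pd i w x0 = 0 \<and> pd i (pd i w) x0 \<ge> 0" by (rule minpr[OF w2 x0])
    then have "pd i u x0 * m x0 + pd i m x0 = 0" unfolding pdw by simp
    then have "0 \<le> exp (u x0) * (pd i (pd i u) x0 * m x0 + pd i u x0 * pd i m x0 + pd i (pd i m) x0)"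
      using mp pdw2[of i] by simp
    then show ?thesis by (simp add: zero_le_mult_iff)
  qed
  have "lap m x0 + divg (\<lambda>y. m y *\<^sub>R grad u y) x0 = (\<Sum>i\<in>UNIV. pd i (pd i u) x0 * m x0 + pd i u x0 * pd i m x0 + pd i (pd i m) x0)"
    using u m by (simp add: divg_sc C2_C1 lap_def sum.distrib algebra_simps)
  also have "\<dots> \<ge> 0" by (intro sum_nonneg key)
  finally have "lam * m x0 \<ge> lam * m0 x0" using eqM[of x0] by linarith
  then have "lam * m x0 \<ge> 0" using m0[of x0] lam by (smt (verit) mult_nonneg_nonneg)
  then have "m x0 \<ge> 0" using lam by (simp add: zero_le_mult_iff)
  then have "w x0 \<ge> 0" unfolding w_def by simp
  then have "w x \<ge> 0" using x0[of x] by linarith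
  then show ?thesis unfolding w_def by (simp add: zero_le_mult_iff)
qed

lemma supn_bound:
  fixes h :: "'a \<Rightarrow> real"
  assumes "bounded (range h)"
  shows "\<bar>h s\<bar> \<le> supn h"
proof -
  obtain B where B: "\<forall>y\<in>range h. norm y \<le> B" using assms bounded_iff by blast
  have "bdd_above (range (\<lambda>s. \<bar>h s\<bar>))"
    using B by (intro bdd_aboveI[of _ B]) auto
  then show ?thesis unfolding supn_def by (rule cSUP_upper[OF UNIV_I])
qed

lemma m0_bounded:
  fixes m0 :: "real^'d::finite \<Rightarrow> real"
  assumes h: "holder_density \<alpha> m0" and a: "0 < \<alpha>" "\<alpha> < 1"
  shows "bounded (range m0)"
proof -
  obtain C where C: "\<And>x y. \<bar>m0 x - m0 y\<bar> \<le> C * norm (x - y) powr \<alpha>"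
    using h unfolding holder_density_def by blast
  have per: "periodic m0" using h unfolding holder_density_def by blast
  obtain B where B: "\<forall>y\<in>cbox 0 (One::real^'d). norm y \<le> B" using bounded_cbox bounded_iff by blast
  have pw: "norm y powr \<alpha> \<le> max 1 B" if "y \<in> cbox 0 One" for y :: "real^'d"
  proof (cases "norm y \<le> 1")
    case True
    then have "norm y powr \<alpha> \<le> 1" using a by (intro powr_le1) auto
    then show ?thesis by simp
  next
    case False
    then have "norm y powr \<alpha> \<le> norm y powr 1" using a by (intro powr_mono) auto
    also have "\<dots> = norm y" by simp
    also have "\<dots> \<le> B" using B that by blast
    finally show ?thesis by simp
  qed
  have "\<bar>m0 y\<bar> \<le> \<bar>m0 0\<bar> + \<bar>C\<bar> * max 1 B" if "y \<in> cbox 0 One" for y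
  proof -
    have "C * norm (y - 0) powr \<alpha> \<le> \<bar>C\<bar> * norm (y - 0) powr \<alpha>"
      by (intro mult_right_mono) auto
    also have "\<dots> \<le> \<bar>C\<bar> * max 1 B" using pw[OF that] by (intro mult_left_mono) auto
    finally show ?thesis using C[of y 0] by linarith
  qed
  note bd = this
  have "\<forall>z\<in>range m0. norm z \<le> \<bar>m0 0\<bar> + \<bar>C\<bar> * max 1 B"
  proof
    fix z assume "z \<in> range m0"
    then obtain x where zx: "z = m0 x" by blast
    obtain y where y: "y \<in> cbox 0 One" "m0 x = m0 y" using periodic_red[OF per, of x] by blast
    show "norm z \<le> \<bar>m0 0\<bar> + \<bar>C\<bar> * max 1 B" using bd[OF y(1)] zx y(2) by simp
  qed
  then show ?thesis unfolding bounded_iff by blast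
qed

theorem theorem2p9:
  fixes f :: "real \<Rightarrow> real" and m0 u m :: "real^'d::finite \<Rightarrow> real"
    and lam \<alpha> K :: real
  assumes lam: "lam > 0"
    and alpha: "0 < \<alpha>" "\<alpha> < 1"
    and m0: "holder_density \<alpha> m0"
    and f: "C1b f"
    and sol: "mfg_sol lam f m0 u m"
    and Kpos: "K > 0"
    and Kbound: "\<forall>lam' (m0' :: real^'d \<Rightarrow> real) u' m'. lam' > 0 \<and> holder_density \<alpha> m0'
                  \<and> mfg_sol lam' f m0' u' m' \<longrightarrow> (\<forall>x. norm (grad u' x) \<le> K)"
    and cond: "(\<forall>s. deriv f s \<ge> 0) \<or>
               lam > max (2 * (2 * supn f + K\<^sup>2 / 2)) (K\<^sup>2 / 2 + supn m0 * supn (deriv f))"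
  shows "stable lam f u m"
proof -
  have pu: "periodic u" and pm: "periodic m" and u2: "C2 u" and m2: "C2 m"
    and eqU: "\<And>x. - lap u x + (1/2) * (norm (grad u x))\<^sup>2 + lam * u x = f (m x)"
    and eqM: "\<And>x. - lap m x - divg (\<lambda>y. m y *\<^sub>R grad u y) x + lam * m x = lam * m0 x"
    using sol unfolding mfg_sol_def by blast+
  have m0nn: "\<And>x. 0 \<le> m0 x" using m0 unfolding holder_density_def by blast
  have mnn: "\<And>x. 0 \<le> m x" by (rule m_nonneg[OF u2 m2 pu pm lam m0nn eqM])
  have Kb: "\<And>x. norm (grad u x) \<le> K" using Kbound lam m0 sol by blast
  have fb: "\<And>s. \<bar>f s\<bar> \<le> supn f" using f unfolding C1b_def by (intro supn_bound) blast
  have fpb: "\<And>s. \<bar>deriv f s\<bar> \<le> supn (deriv f)" using f unfolding C1b_def by (intro supn_bound) blast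
  have cfp: "continuous_on UNIV (deriv f)" using f unfolding C1b_def by blast
  have cm: "continuous_on UNIV m" "continuous_on UNIV u" using m2 u2 by (auto intro: C1_cont C2_C1)
  show ?thesis unfolding stable_def
  proof (intro allI impI)
    fix v \<rho> :: "real^'d \<Rightarrow> real"
    assume H: "periodic v \<and> periodic \<rho> \<and> C2 v \<and> C2 \<rho> \<and>
     (\<forall>x. - lap v x + grad u x \<bullet> grad v x + lam * v x = deriv f (m x) * \<rho> x) \<and>
     (\<forall>x. - lap \<rho> x - divg (\<lambda>y. \<rho> y *\<^sub>R grad u y) x + lam * \<rho> x
            = divg (\<lambda>y. m y *\<^sub>R grad v y) x)"
    then have pv: "periodic v" and pr: "periodic \<rho>" and v2: "C2 v" and r2: "C2 \<rho>"
      and eqV: "\<And>x. - lap v x + grad u x \<bullet> grad v x + lam * v x = deriv f (m x) * \<rho> x"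
      and eqR: "\<And>x. - lap \<rho> x - divg (\<lambda>y. \<rho> y *\<^sub>R grad u y) x + lam * \<rho> x
            = divg (\<lambda>y. m y *\<^sub>R grad v y) x"
      by blast+
    have LLi: "integral (cbox 0 One) (\<lambda>x. deriv f (m x) * (\<rho> x)\<^sup>2 + m x * (norm (grad v x))\<^sup>2) = 0"
      by (rule LL[OF u2 m2 v2 r2 pu pm pv pr eqV eqR])
    have cr: "continuous_on UNIV \<rho>" "\<And>i. continuous_on UNIV (pd i v)"
      using v2 r2 by (auto intro: C1_cont C1_pdcont C2_C1)
    have cfm: "continuous_on UNIV (\<lambda>x. deriv f (m x))"
      by (rule continuous_on_compose2[OF cfp cm(1)]) auto
    have cN: "continuous_on UNIV (\<lambda>x. \<Sum>i\<in>UNIV. pd i v x * pd i v x)"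
      using cr by (auto intro!: continuous_intros)
    have ng: "(norm (grad v x))\<^sup>2 = (\<Sum>i\<in>UNIV. pd i v x * pd i v x)" for x by (rule norm_grad2)
    have Nnn: "0 \<le> (\<Sum>i\<in>UNIV. pd i v x * pd i v x)" for x by (intro sum_nonneg) auto
    have vzero_from: "v = (\<lambda>_. 0)" if "\<And>x. deriv f (m x) * \<rho> x = 0"
    proof
      fix x show "v x = 0"
        by (rule V_zero[OF u2 v2 pv lam]) (use eqV that in simp)
    qed
    from cond show "v = (\<lambda>_. 0) \<and> \<rho> = (\<lambda>_. 0)"
    proof
      assume fpos: "\<forall>s. deriv f s \<ge> 0"
      have cI: "continuous_on UNIV (\<lambda>x. deriv f (m x) * (\<rho> x)\<^sup>2 + m x * (norm (grad v x))\<^sup>2)"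
        unfolding ng using cfm cr cm cN by (intro continuous_intros) auto
      have t1: "deriv f (m x) * (\<rho> x)\<^sup>2 \<ge> 0" for x using fpos by simp
      have t2: "m x * (norm (grad v x))\<^sup>2 \<ge> 0" for x using mnn[of x] by simp
      have z: "deriv f (m x) * (\<rho> x)\<^sup>2 = 0" if "x \<in> cbox 0 One" for x
      proof -
        have "deriv f (m x) * (\<rho> x)\<^sup>2 + m x * (norm (grad v x))\<^sup>2 = 0"
          by (rule zero_from_int[OF cI _ LLi that]) (use t1 t2 in \<open>simp add: add_nonneg_nonneg\<close>)
        then show ?thesis using t1[of x] t2[of x] by linarith
      qed
      have pz: "periodic (\<lambda>x. deriv f (m x) * (\<rho> x)\<^sup>2)" using pm pr by (simp add: periodic_def)
      have z2: "deriv f (m x) * \<rho> x = 0" for x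
      proof -
        have "deriv f (m x) * (\<rho> x)\<^sup>2 = 0" using zero_everywhere[OF pz z] by simp
        then show ?thesis by (simp add: power2_eq_square)
      qed
      have v0: "v = (\<lambda>_. 0)" by (rule vzero_from[OF z2])
      have eqR0: "- lap \<rho> x - divg (\<lambda>y. \<rho> y *\<^sub>R grad u y) x + lam * \<rho> x = 0" for x
        using eqR[of x] unfolding v0 by (simp add: grad_def divg_def pd_const)
      have "\<rho> x = 0" for x by (rule RhoZero[OF u2 r2 pu pr lam eqR0])
      with v0 show ?thesis by auto
    next
      assume lamb: "lam > max (2 * (2 * supn f + K\<^sup>2 / 2)) (K\<^sup>2 / 2 + supn m0 * supn (deriv f))"
      define S where "S = supn m0"
      define F where "F = supn (deriv f)"
      define F0 where "F0 = supn f"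
      have m0b: "\<And>x. m0 x \<le> S" unfolding S_def
        using supn_bound[OF m0_bounded[OF m0 alpha]] by (metis abs_le_D1)
      have S0: "0 \<le> S" using m0b[of 0] m0nn[of 0] by linarith
      have F0': "0 \<le> F" using fpb[of 0] unfolding F_def by linarith
      have F00: "0 \<le> F0" using fb[of 0] unfolding F0_def by linarith
      have lam1: "lam > 2 * (2 * F0 + K\<^sup>2 / 2)" and lam2: "lam > K\<^sup>2 / 2 + S * F"
        using lamb unfolding S_def F_def F0_def by auto
      obtain x2 where x2: "\<And>x. u x \<le> u x2" using periodic_max[OF pu cm(2)] by blast
      have ub: "lam * u x \<le> F0" for x
      proof -
        have g: "grad u x2 = 0 \<and> lap u x2 \<le> 0" by (rule maxpr_lap[OF u2 x2])
        then have "lam * u x2 \<le> f (m x2)" using eqU[of x2] by simp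
        also have "\<dots> \<le> F0" using fb[of "m x2"] unfolding F0_def by linarith
        finally have "lam * u x2 \<le> F0" .
        moreover have "lam * u x \<le> lam * u x2" using x2[of x] lam by simp
        ultimately show ?thesis by linarith
      qed
      obtain x1 where x1: "\<And>x. m x \<le> m x1" using periodic_max[OF pm cm(1)] by blast
      have mb: "m x \<le> 2 * S" for x
      proof -
        have g: "grad m x1 = 0 \<and> lap m x1 \<le> 0" by (rule maxpr_lap[OF m2 x1])
        then have pdm: "pd i m x1 = 0" for i by (simp add: grad_def vec_eq_iff)
        have dv: "divg (\<lambda>y. m y *\<^sub>R grad u y) x1 = m x1 * lap u x1"
          using m2 u2 by (simp add: divg_sc C2_C1 pdm lap_def sum_distrib_left)
        have "(norm (grad u x1))\<^sup>2 \<le> K\<^sup>2" using Kb[of x1] by (intro power_mono) auto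
        then have lu: "lap u x1 \<le> K\<^sup>2 / 2 + 2 * F0"
          using eqU[of x1] ub[of x1] fb[of "m x1"] unfolding F0_def by linarith
        have "lam * m0 x1 = - lap m x1 - m x1 * lap u x1 + lam * m x1" using eqM[of x1] dv by simp
        then have e1: "(lam - lap u x1) * m x1 = lam * m0 x1 + lap m x1" by (simp add: algebra_simps)
        have "lam * m0 x1 \<le> lam * S" using m0b[of x1] lam by (intro mult_left_mono) auto
        then have "(lam - lap u x1) * m x1 \<le> lam * S" using e1 g by linarith
        moreover have "(lam - (K\<^sup>2 / 2 + 2 * F0)) * m x1 \<le> (lam - lap u x1) * m x1"
          using lu mnn[of x1] by (intro mult_right_mono) auto
        moreover have "lam * S \<le> (lam - (K\<^sup>2 / 2 + 2 * F0)) * (2 * S)"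
        proof -
          have "(lam - (K\<^sup>2 / 2 + 2 * F0)) * (2 * S) - lam * S = (lam - 2 * (2 * F0 + K\<^sup>2 / 2)) * S"
            by (simp add: algebra_simps)
          moreover have "0 \<le> (lam - 2 * (2 * F0 + K\<^sup>2 / 2)) * S" using lam1 S0 by simp
          ultimately show ?thesis by linarith
        qed
        ultimately have "(lam - (K\<^sup>2 / 2 + 2 * F0)) * m x1 \<le> (lam - (K\<^sup>2 / 2 + 2 * F0)) * (2 * S)"
          by linarith
        moreover have "0 < lam - (K\<^sup>2 / 2 + 2 * F0)" using lam1 F00 zero_le_power2[of K] by argo
        ultimately have "m x1 \<le> 2 * S" by (simp add: mult_le_cancel_left_pos)
        then show ?thesis using x1[of x] by linarith
      qed
      define J where "J = integral (cbox 0 One) (\<lambda>x. (\<rho> x)\<^sup>2)"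
      define I where "I = integral (cbox 0 One) (\<lambda>x. m x * (\<Sum>i\<in>UNIV. pd i v x * pd i v x))"
      have cr2: "continuous_on UNIV (\<lambda>x. (\<rho> x)\<^sup>2)" using cr by (auto intro!: continuous_intros)
      have cA: "continuous_on UNIV (\<lambda>x. deriv f (m x) * (\<rho> x)\<^sup>2)" using cfm cr2 by (auto intro!: continuous_intros)
      have cB: "continuous_on UNIV (\<lambda>x. m x * (\<Sum>i\<in>UNIV. pd i v x * pd i v x))" using cm cN by (auto intro!: continuous_intros)
      have cB2: "continuous_on UNIV (\<lambda>x. (m x)\<^sup>2 * (\<Sum>i\<in>UNIV. pd i v x * pd i v x))" using cm cN by (auto intro!: continuous_intros)
      have J0: "0 \<le> J" unfolding J_def by (intro integral_nonneg cube_integrable cr2) auto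
      have "integral (cbox 0 One) (\<lambda>x. deriv f (m x) * (\<rho> x)\<^sup>2) + I = 0"
        using LLi unfolding ng I_def
        by (subst integral_add[symmetric]) (auto intro!: cube_integrable cA cB)
      moreover have "integral (cbox 0 One) (\<lambda>x. deriv f (m x) * (\<rho> x)\<^sup>2) \<ge> integral (cbox 0 One) (\<lambda>x. - F * (\<rho> x)\<^sup>2)"
      proof (intro integral_le cube_integrable cA)
        show "continuous_on UNIV (\<lambda>x. - F * (\<rho> x)\<^sup>2)" using cr2 by (intro continuous_on_mult_left)
        fix x
        have "- F \<le> deriv f (m x)" using fpb[of "m x"] unfolding F_def by linarith
        then show "- F * (\<rho> x)\<^sup>2 \<le> deriv f (m x) * (\<rho> x)\<^sup>2" by (intro mult_right_mono) auto
      qed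
      moreover have "integral (cbox 0 One) (\<lambda>x. - F * (\<rho> x)\<^sup>2) = - F * J"
        unfolding J_def by (rule integral_mult_right)
      ultimately have IJ: "I \<le> F * J" by linarith
      have RE: "(lam - K\<^sup>2 / 2) * J \<le> 1/2 * integral (cbox 0 One) (\<lambda>x. (m x)\<^sup>2 * (\<Sum>i\<in>UNIV. pd i v x * pd i v x))"
        unfolding J_def by (rule RhoEst[OF u2 m2 v2 r2 pu pm pv pr eqR Kb])
      have "integral (cbox 0 One) (\<lambda>x. (m x)\<^sup>2 * (\<Sum>i\<in>UNIV. pd i v x * pd i v x))
          \<le> integral (cbox 0 One) (\<lambda>x. (2 * S) * (m x * (\<Sum>i\<in>UNIV. pd i v x * pd i v x)))"
      proof (intro integral_le cube_integrable cB2)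
        show "continuous_on UNIV (\<lambda>x. (2 * S) * (m x * (\<Sum>i\<in>UNIV. pd i v x * pd i v x)))"
          using cB by (intro continuous_on_mult_left)
        fix x
        have "(m x)\<^sup>2 * (\<Sum>i\<in>UNIV. pd i v x * pd i v x) = m x * (m x * (\<Sum>i\<in>UNIV. pd i v x * pd i v x))"
          by (simp add: power2_eq_square)
        also have "\<dots> \<le> (2 * S) * (m x * (\<Sum>i\<in>UNIV. pd i v x * pd i v x))"
          using mb[of x] mnn[of x] Nnn[of x] by (intro mult_right_mono) auto
        finally show "(m x)\<^sup>2 * (\<Sum>i\<in>UNIV. pd i v x * pd i v x) \<le> (2 * S) * (m x * (\<Sum>i\<in>UNIV. pd i v x * pd i v x))" .
      qed
      also have "\<dots> = 2 * S * I" unfolding I_def by (rule integral_mult_right)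
      finally have "(lam - K\<^sup>2 / 2) * J \<le> S * I" using RE by linarith
      also have "\<dots> \<le> S * (F * J)" using IJ S0 by (intro mult_left_mono) auto
      finally have "(lam - K\<^sup>2 / 2 - S * F) * J \<le> 0" by (simp add: algebra_simps)
      moreover have "0 < lam - K\<^sup>2 / 2 - S * F" using lam2 by linarith
      ultimately have "J \<le> 0" by (simp add: mult_le_0_iff)
      then have J00: "J = 0" using J0 by linarith
      have z: "(\<rho> x)\<^sup>2 = 0" if "x \<in> cbox 0 One" for x
        by (rule zero_from_int[OF cr2 _ _ that]) (use J00 J_def in auto)
      have pz: "periodic (\<lambda>x. (\<rho> x)\<^sup>2)" using pr by (simp add: periodic_def)
      have r0: "\<rho> x = 0" for x using zero_everywhere[OF pz z] by simp
      have v0: "v = (\<lambda>_. 0)" by (rule vzero_from) (simp add: r0)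
      show ?thesis using v0 r0 by auto
    qed
  qed
qed

end
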